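(* Let $X=X(s)$ be a strictly convex $C^{(3)}$ curve in the plane $\mathbb{R}^2$, parametrized by arclength. Suppose there is a function $\lambda(s)$ such that for all $s$ and all sufficiently small $h_1,h_2$ (with $X(s),X(s+h_1),X(s+h_2)$ distinct) we have $$U(s,h_1,h_2)=\lambda(s)\,T(s,h_1,h_2).$$ Then $\lambda(s)=\frac12$ for all $s$ and $X$ is an open part of a parabola.
   Context: A regular plane curve $X$ defined on an open interval is convex if for every point of $X$ the trace of $X$ lies entirely in one closed half-plane determined by the tangent line at that point. A simple convex curve $X$ is strictly convex if it is of class $C^{(3)}$ and has positive curvature with respect to the unit normal pointing to the convex side. For three distinct points $A=X(s)$, $A_i=X(s+h_i)$ ($i=1,2$) on $X$, let $\ell,\ell_1,\ell_2$ be the tangent lines of $X$ at $A,A_1,A_2$, and let $B=\ell_1\cap\ell_2$, $B_1=\ell\cap\ell_1$, $B_2=\ell\cap\ell_2$. Define $T(s,h_1,h_2)=|\triangle AA_1A_2|$ and $U(s,h_1,h_2)=|\triangle BB_1B_2|$ (areas). *)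

theory Defs
  imports "HOL-Analysis.Analysis"
begin

definition cross2 :: "real \<times> real \<Rightarrow> real \<times> real \<Rightarrow> real" where
  "cross2 a b = fst a * snd b - snd a * fst b"

definition tri_area :: "real \<times> real \<Rightarrow> real \<times> real \<Rightarrow> real \<times> real \<Rightarrow> real" where
  "tri_area A B C = \<bar>cross2 (B - A) (C - A)\<bar> / 2"

text \<open>Intersection point of the lines P + s u and Q + r v (meaningful when u, v not parallel).\<close>
definition line_inter :: "real \<times> real \<Rightarrow> real \<times> real \<Rightarrow> real \<times> real \<Rightarrow> real \<times> real \<Rightarrow> real \<times> real" where
  "line_inter P u Q v = P + (cross2 (Q - P) v / cross2 u v) *\<^sub>R u"

definition C3_on :: "real set \<Rightarrow> (real \<Rightarrow> real \<times> real) \<Rightarrow> bool" where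
  "C3_on I X \<longleftrightarrow> (\<exists>D1 D2 D3. \<forall>t\<in>I.
      (X has_vector_derivative D1 t) (at t) \<and>
      (D1 has_vector_derivative D2 t) (at t) \<and>
      (D2 has_vector_derivative D3 t) (at t) \<and>
      continuous (at t) D3)"

abbreviation vd1 :: "(real \<Rightarrow> real \<times> real) \<Rightarrow> real \<Rightarrow> real \<times> real" where
  "vd1 X t \<equiv> vector_derivative X (at t)"

abbreviation vd2 :: "(real \<Rightarrow> real \<times> real) \<Rightarrow> real \<Rightarrow> real \<times> real" where
  "vd2 X t \<equiv> vector_derivative (\<lambda>u. vector_derivative X (at u)) (at t)"

definition convex_curve :: "real set \<Rightarrow> (real \<Rightarrow> real \<times> real) \<Rightarrow> bool" where
  "convex_curve I X \<longleftrightarrow> (\<forall>t\<in>I.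
      (\<forall>u\<in>I. cross2 (vd1 X t) (X u - X t) \<ge> 0) \<or>
      (\<forall>u\<in>I. cross2 (vd1 X t) (X u - X t) \<le> 0))"

definition strictly_convex_curve :: "real set \<Rightarrow> (real \<Rightarrow> real \<times> real) \<Rightarrow> bool" where
  "strictly_convex_curve I X \<longleftrightarrow>
     inj_on X I \<and> convex_curve I X \<and> C3_on I X \<and>
     (\<forall>t\<in>I. vd1 X t \<noteq> 0 \<and>
        (\<exists>N. norm N = 1 \<and> inner N (vd1 X t) = 0 \<and>
             (\<forall>u\<in>I. inner (X u - X t) N \<ge> 0) \<and>
             inner (vd2 X t) N / (norm (vd1 X t))\<^sup>2 > 0))"

definition T_area :: "(real \<Rightarrow> real \<times> real) \<Rightarrow> real \<Rightarrow> real \<Rightarrow> real \<Rightarrow> real" where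
  "T_area X s h1 h2 = tri_area (X s) (X (s + h1)) (X (s + h2))"

definition U_area :: "(real \<Rightarrow> real \<times> real) \<Rightarrow> real \<Rightarrow> real \<Rightarrow> real \<Rightarrow> real" where
  "U_area X s h1 h2 =
     (let A = X s; A1 = X (s + h1); A2 = X (s + h2);
          d = vd1 X s; d1 = vd1 X (s + h1); d2 = vd1 X (s + h2);
          B = line_inter A1 d1 A2 d2;
          B1 = line_inter A d A1 d1;
          B2 = line_inter A d A2 d2
      in tri_area B B1 B2)"

text \<open>A parabola: image of y = x^2 under an invertible affine map.\<close>
definition is_parabola :: "(real \<times> real) set \<Rightarrow> bool" where
  "is_parabola P \<longleftrightarrow> (\<exists>c u w. cross2 u w \<noteq> 0 \<and>
      P = {c + t *\<^sub>R u + t\<^sup>2 *\<^sub>R w | t. True})"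

end

theory Submission
  imports Defs "HOL-Homology.Invariance_of_Domain" "HOL-Computational_Algebra.Polynomial"
begin


lemma inner_rr: "inner (a::real\<times>real) b = fst a * fst b + snd a * snd b"
  by (simp add: inner_prod_def)

lemma hvd_fst: "(f has_vector_derivative f') F \<Longrightarrow> ((\<lambda>x. fst (f x)) has_real_derivative fst f') F"
  unfolding has_vector_derivative_def has_field_derivative_def
  apply (drule has_derivative_fst) apply (erule has_derivative_eq_rhs) by (auto simp: fun_eq_iff)

lemma hvd_snd: "(f has_vector_derivative f') F \<Longrightarrow> ((\<lambda>x. snd (f x)) has_real_derivative snd f') F"
  unfolding has_vector_derivative_def has_field_derivative_def
  apply (drule has_derivative_snd) apply (erule has_derivative_eq_rhs) by (auto simp: fun_eq_iff)

lemma cross2_deriv: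
  assumes "(f has_vector_derivative f') (at x within S)" "(g has_vector_derivative g') (at x within S)"
  shows "((\<lambda>u. cross2 (f u) (g u)) has_real_derivative (cross2 f' (g x) + cross2 (f x) g')) (at x within S)"
proof -
  note a = hvd_fst[OF assms(1)] hvd_snd[OF assms(1)] hvd_fst[OF assms(2)] hvd_snd[OF assms(2)]
  have "((\<lambda>u. fst (f u) * snd (g u) - snd (f u) * fst (g u)) has_real_derivative
     (fst f' * snd (g x) + snd g' * fst (f x)) - (snd f' * fst (g x) + fst g' * snd (f x))) (at x within S)"
    by (intro DERIV_diff DERIV_mult a)
  then show ?thesis unfolding cross2_def by (rule DERIV_cong) (simp add: algebra_simps)
qed

lemma inner_deriv:
  assumes "(f has_vector_derivative f') (at x within S)" "(g has_vector_derivative g') (at x within S)"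
  shows "((\<lambda>u. inner (f u) (g u::real\<times>real)) has_real_derivative (inner f' (g x) + inner (f x) g')) (at x within S)"
proof -
  note a = hvd_fst[OF assms(1)] hvd_snd[OF assms(1)] hvd_fst[OF assms(2)] hvd_snd[OF assms(2)]
  have "((\<lambda>u. fst (f u) * fst (g u) + snd (f u) * snd (g u)) has_real_derivative
     (fst f' * fst (g x) + fst g' * fst (f x)) + (snd f' * snd (g x) + snd g' * snd (f x))) (at x within S)"
    by (intro DERIV_add DERIV_mult a)
  then show ?thesis unfolding inner_rr by (rule DERIV_cong) (simp add: algebra_simps)
qed

lemma hvd_const: "((\<lambda>u. c) has_vector_derivative 0) F"
  by (simp add: has_vector_derivative_def)

lemma cross2_self[simp]: "cross2 a a = 0" by (simp add: cross2_def)
lemma cross2_zero[simp]: "cross2 0 a = 0" "cross2 a 0 = 0" by (simp_all add: cross2_def)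

lemma pluecker: "cross2 a c * cross2 b d - cross2 a d * cross2 b c = cross2 a b * cross2 c d"
  by (simp add: cross2_def algebra_simps)

lemma decomp_cross: assumes "norm (T::real\<times>real) = 1"
  shows "cross2 a b = inner T a * cross2 T b - cross2 T a * inner T b"
proof -
  obtain t1 t2 where T: "T = (t1,t2)" by fastforce
  obtain a1 a2 where a: "a = (a1,a2)" by fastforce
  obtain b1 b2 where b: "b = (b1,b2)" by fastforce
  have h: "t1*t1 + t2*t2 = 1" using assms by (simp add: norm_prod_def T power2_eq_square)
  have "(t1*a1+t2*a2)*(t1*b2-t2*b1) - (t1*a2-t2*a1)*(t1*b1+t2*b2) = (t1*t1 + t2*t2)*(a1*b2 - a2*b1)"
    by (simp add: algebra_simps)
  then show ?thesis by (simp add: T a b cross2_def inner_rr h)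
qed

lemma decomp_vec: assumes "norm (T::real\<times>real) = 1"
  shows "v = inner T v *\<^sub>R T + cross2 T v *\<^sub>R (- snd T, fst T)"
proof -
  obtain a b where T: "T = (a,b)" by fastforce
  obtain p q where v: "v = (p,q)" by fastforce
  have h: "a*a + b*b = 1" using assms by (simp add: norm_prod_def T power2_eq_square)
  have "(a*p+b*q)*a - (a*q - b*p)*b = (a*a+b*b)*p" "(a*p+b*q)*b + (a*q - b*p)*a = (a*a+b*b)*q"
    by (simp_all add: algebra_simps)
  then show ?thesis by (simp add: T v cross2_def inner_rr h)
qed

lemma tri_area_line: "tri_area B (A + a *\<^sub>R T) (A + b *\<^sub>R T) = \<bar>b - a\<bar> * \<bar>cross2 T (B - A)\<bar> / 2"
proof -
  have "cross2 (A + a *\<^sub>R T - B) (A + b *\<^sub>R T - B) = (b - a) * cross2 T (B - A)"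
    by (simp add: cross2_def algebra_simps)
  then show ?thesis by (simp add: tri_area_def abs_mult)
qed


locale C3c =
  fixes X D1 D2 D3 :: "real \<Rightarrow> real \<times> real" and I :: "real set"
  assumes Iopen: "open I"
  and dX: "\<And>t. t \<in> I \<Longrightarrow> (X has_vector_derivative D1 t) (at t)"
  and dD1: "\<And>t. t \<in> I \<Longrightarrow> (D1 has_vector_derivative D2 t) (at t)"
  and dD2: "\<And>t. t \<in> I \<Longrightarrow> (D2 has_vector_derivative D3 t) (at t)"
  and cD3: "\<And>t. t \<in> I \<Longrightarrow> continuous (at t) D3"
  and unit: "\<And>t. t \<in> I \<Longrightarrow> norm (D1 t) = 1"
  and kne: "\<And>t. t \<in> I \<Longrightarrow> cross2 (D1 t) (D2 t) \<noteq> 0"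
  and orth: "\<And>t. t \<in> I \<Longrightarrow> inner (D1 t) (D2 t) = 0"
begin

definition "yy s u = cross2 (D1 s) (X u - X s)"
definition "y1 s u = cross2 (D1 s) (D1 u)"
definition "y2 s u = cross2 (D1 s) (D2 u)"
definition "y3 s u = cross2 (D1 s) (D3 u)"
definition "xx s u = inner (D1 s) (X u - X s)"
definition "x1 s u = inner (D1 s) (D1 u)"
definition "x2 s u = inner (D1 s) (D2 u)"
definition "x3 s u = inner (D1 s) (D3 u)"
definition "GG s u = cross2 (X u - X s) (D1 u)"
definition "G1 s u = cross2 (X u - X s) (D2 u)"
definition "kk u = cross2 (D1 u) (D2 u)"
definition "mm s u = GG s u / y1 s u"
definition "num s u = 2 * yy s u * x1 s u - xx s u * y1 s u"
definition "num1 s u = x1 s u * y1 s u + 2 * yy s u * x2 s u - xx s u * y2 s u"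
definition "num2 s u = 3 * x2 s u * y1 s u + 2 * yy s u * x3 s u - xx s u * y3 s u"

lemma dPv: "u \<in> I \<Longrightarrow> ((\<lambda>u. X u - X s) has_vector_derivative D1 u) (at u)"
  using has_vector_derivative_diff[OF dX has_vector_derivative_const] by simp

lemma d_yy: "u \<in> I \<Longrightarrow> DERIV (yy s) u :> y1 s u"
  unfolding yy_def y1_def using cross2_deriv[OF has_vector_derivative_const dPv] by simp
lemma d_y1: "u \<in> I \<Longrightarrow> DERIV (y1 s) u :> y2 s u"
  unfolding y1_def y2_def using cross2_deriv[OF has_vector_derivative_const dD1] by simp
lemma d_y2: "u \<in> I \<Longrightarrow> DERIV (y2 s) u :> y3 s u"
  unfolding y2_def y3_def using cross2_deriv[OF has_vector_derivative_const dD2] by simp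
lemma d_xx: "u \<in> I \<Longrightarrow> DERIV (xx s) u :> x1 s u"
  unfolding xx_def x1_def using inner_deriv[OF has_vector_derivative_const dPv] by simp
lemma d_x1: "u \<in> I \<Longrightarrow> DERIV (x1 s) u :> x2 s u"
  unfolding x1_def x2_def using inner_deriv[OF has_vector_derivative_const dD1] by simp
lemma d_x2: "u \<in> I \<Longrightarrow> DERIV (x2 s) u :> x3 s u"
  unfolding x2_def x3_def using inner_deriv[OF has_vector_derivative_const dD2] by simp
lemma d_GG: "u \<in> I \<Longrightarrow> DERIV (GG s) u :> G1 s u"
  unfolding GG_def G1_def using cross2_deriv[OF dPv dD1] by simp

lemma d_num: "u \<in> I \<Longrightarrow> DERIV (num s) u :> num1 s u"
proof -
  assume u: "u \<in> I"
  have "DERIV (\<lambda>u. 2 * yy s u * x1 s u - xx s u * y1 s u) u :>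
     2 * y1 s u * x1 s u + x2 s u * (2 * yy s u) - (x1 s u * y1 s u + y2 s u * xx s u)"
    by (intro DERIV_diff DERIV_mult DERIV_cmult d_yy d_x1 d_xx d_y1 u)
  then show ?thesis unfolding num_def[abs_def] num1_def by (rule DERIV_cong) (simp add: algebra_simps)
qed

lemma d_num1: "u \<in> I \<Longrightarrow> DERIV (num1 s) u :> num2 s u"
proof -
  assume u: "u \<in> I"
  have "DERIV (\<lambda>u. x1 s u * y1 s u + 2 * yy s u * x2 s u - xx s u * y2 s u) u :>
     (x2 s u * y1 s u + y2 s u * x1 s u) + (2 * y1 s u * x2 s u + x3 s u * (2 * yy s u))
      - (x1 s u * y2 s u + y3 s u * xx s u)"
    by (intro DERIV_diff DERIV_add DERIV_mult DERIV_cmult d_yy d_x1 d_xx d_y1 d_x2 d_y2 u)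
  then show ?thesis unfolding num1_def[abs_def] num2_def by (rule DERIV_cong) (simp add: algebra_simps)
qed

lemma contD1: "u \<in> I \<Longrightarrow> isCont D1 u"
  using has_vector_derivative_continuous[OF dD1] by simp
lemma contD2: "u \<in> I \<Longrightarrow> isCont D2 u"
  using has_vector_derivative_continuous[OF dD2] by simp
lemma contX: "u \<in> I \<Longrightarrow> isCont X u"
  using has_vector_derivative_continuous[OF dX] by simp

lemma ev_I: "s \<in> I \<Longrightarrow> eventually (\<lambda>u. u \<in> I) (at s)"
  using eventually_at_in_open'[OF Iopen] by blast

lemma ev_ne: "eventually (\<lambda>u. u \<noteq> s) (at s)"
  by (simp add: eventually_at_filter)

lemma quot_lim: assumes "DERIV f s :> D" "f s = 0"
  shows "((\<lambda>u. f u / (u - s)) \<longlongrightarrow> D) (at s)"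
  using assms(1) unfolding has_field_derivative_iff by (simp add: assms(2))

lemma vals: "s \<in> I \<Longrightarrow> yy s s = 0 \<and> y1 s s = 0 \<and> y2 s s = kk s \<and> xx s s = 0 \<and> x1 s s = 1 \<and> x2 s s = 0
   \<and> GG s s = 0 \<and> G1 s s = 0 \<and> num s s = 0 \<and> num1 s s = 0"
  using unit[of s] orth[of s]
  by (simp add: yy_def y1_def y2_def xx_def x1_def x2_def GG_def G1_def kk_def num_def num1_def
      inner_commute power2_norm_eq_inner[symmetric])

lemma lim_y1: "s \<in> I \<Longrightarrow> ((\<lambda>u. y1 s u / (u - s)) \<longlongrightarrow> kk s) (at s)"
  using quot_lim[OF d_y1, of s s] vals by simp
lemma lim_yy1: "s \<in> I \<Longrightarrow> ((\<lambda>u. yy s u / (u - s)) \<longlongrightarrow> 0) (at s)"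
  using quot_lim[OF d_yy, of s s] vals by simp
lemma lim_xx1: "s \<in> I \<Longrightarrow> ((\<lambda>u. xx s u / (u - s)) \<longlongrightarrow> 1) (at s)"
  using quot_lim[OF d_xx, of s s] vals by simp

lemma cont_comp: "s \<in> I \<Longrightarrow> isCont (\<lambda>u. cross2 c (D2 u)) s \<and> isCont (\<lambda>u. inner c (D2 u)) s
   \<and> isCont (\<lambda>u. cross2 c (D3 u)) s \<and> isCont (\<lambda>u. inner c (D3 u)) s
   \<and> isCont (\<lambda>u. cross2 (D1 u) (D2 u)) s"
  using contD2[of s] cD3[of s] contD1[of s]
  by (auto simp: cross2_def inner_rr intro!: continuous_intros)

lemma lim_x2: "s \<in> I \<Longrightarrow> ((\<lambda>u. x2 s u) \<longlongrightarrow> 0) (at s)"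
  using cont_comp[of s "D1 s"] vals[of s] unfolding isCont_def x2_def by auto
lemma lim_x3: "s \<in> I \<Longrightarrow> ((\<lambda>u. x3 s u) \<longlongrightarrow> x3 s s) (at s)"
  using cont_comp[of s "D1 s"] unfolding isCont_def x3_def by auto
lemma lim_y3: "s \<in> I \<Longrightarrow> ((\<lambda>u. y3 s u) \<longlongrightarrow> y3 s s) (at s)"
  using cont_comp[of s "D1 s"] unfolding isCont_def y3_def by auto
lemma lim_kk: "s \<in> I \<Longrightarrow> ((\<lambda>u. kk u) \<longlongrightarrow> kk s) (at s)"
  using cont_comp[of s "D1 s"] unfolding isCont_def kk_def by auto

end


lemma lh2: fixes f f' :: "real \<Rightarrow> real"
  assumes "eventually (\<lambda>u. DERIV f u :> f' u) (at s)" "(f \<longlongrightarrow> 0) (at s)"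
    "((\<lambda>u. f' u / (u - s)) \<longlongrightarrow> L) (at s)"
  shows "((\<lambda>u. f u / (u - s)^2) \<longlongrightarrow> L / 2) (at s)"
proof (rule lhopital[where f'=f' and g'="\<lambda>u. 2 * (u - s)"])
  show "(f \<longlongrightarrow> 0) (at s)" by fact
  have "((\<lambda>u. (u - s)^2) \<longlongrightarrow> (s - s)^2) (at s)" by (intro tendsto_intros)
  then show "((\<lambda>u. (u - s)^2) \<longlongrightarrow> 0) (at s)" by simp
  show "\<forall>\<^sub>F x in at s. (x - s)\<^sup>2 \<noteq> 0" "\<forall>\<^sub>F x in at s. 2 * (x - s) \<noteq> 0"
    by (simp_all add: eventually_at_filter)
  show "\<forall>\<^sub>F x in at s. DERIV f x :> f' x" by fact
  show "\<forall>\<^sub>F x in at s. ((\<lambda>u. (u - s)\<^sup>2) has_real_derivative 2 * (x - s)) (at x)"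
  proof (intro always_eventually allI)
    fix x
    have "DERIV (\<lambda>u. u - s) x :> 1 - 0" by (intro DERIV_diff DERIV_ident DERIV_const)
    from DERIV_power[OF this, where n=2] show "DERIV (\<lambda>u. (u - s)^2) x :> 2 * (x - s)" by (simp add: eval_nat_numeral)
  qed
  have "((\<lambda>u. (f' u / (u - s)) * (1/2)) \<longlongrightarrow> L * (1/ 2)) (at s)" by (rule tendsto_mult[OF assms(3) tendsto_const])
  then show "((\<lambda>x. f' x / (2 * (x - s))) \<longlongrightarrow> L / 2) (at s)" by (simp add: field_simps)
qed

lemma lh3: fixes f f' :: "real \<Rightarrow> real"
  assumes "eventually (\<lambda>u. DERIV f u :> f' u) (at s)" "(f \<longlongrightarrow> 0) (at s)"
    "((\<lambda>u. f' u / (u - s)^2) \<longlongrightarrow> L) (at s)"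
  shows "((\<lambda>u. f u / (u - s)^3) \<longlongrightarrow> L / 3) (at s)"
proof (rule lhopital[where f'=f' and g'="\<lambda>u. 3 * (u - s)^2"])
  show "(f \<longlongrightarrow> 0) (at s)" by fact
  have "((\<lambda>u. (u - s)^3) \<longlongrightarrow> (s - s)^3) (at s)" by (intro tendsto_intros)
  then show "((\<lambda>u. (u - s)^3) \<longlongrightarrow> 0) (at s)" by simp
  show "\<forall>\<^sub>F x in at s. (x - s)^3 \<noteq> 0" "\<forall>\<^sub>F x in at s. 3 * (x - s)^2 \<noteq> 0"
    by (simp_all add: eventually_at_filter)
  show "\<forall>\<^sub>F x in at s. DERIV f x :> f' x" by fact
  show "\<forall>\<^sub>F x in at s. ((\<lambda>u. (u - s)^3) has_real_derivative 3 * (x - s)^2) (at x)"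
  proof (intro always_eventually allI)
    fix x
    have "DERIV (\<lambda>u. u - s) x :> 1 - 0" by (intro DERIV_diff DERIV_ident DERIV_const)
    from DERIV_power[OF this, where n=3] show "DERIV (\<lambda>u. (u - s)^3) x :> 3 * (x - s)^2" by (simp add: eval_nat_numeral)
  qed
  have "((\<lambda>u. (f' u / (u - s)^2) * (1/3)) \<longlongrightarrow> L * (1/3)) (at s)" by (rule tendsto_mult[OF assms(3) tendsto_const])
  then show "((\<lambda>x. f' x / (3 * (x - s)^2)) \<longlongrightarrow> L / 3) (at s)" by (simp add: field_simps)
qed

context C3c begin

lemma tend0: assumes "s \<in> I" "DERIV f s :> D" "f s = 0" shows "(f \<longlongrightarrow> 0) (at s)"
  using DERIV_continuous[OF assms(2)] assms(3) by (simp add: isCont_def)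

lemma lim_yy2: assumes s: "s \<in> I" shows "((\<lambda>u. yy s u / (u - s)^2) \<longlongrightarrow> kk s / 2) (at s)"
proof -
  have "eventually (\<lambda>u. DERIV (yy s) u :> y1 s u) (at s)" using ev_I[OF s] by (rule eventually_mono) (rule d_yy)
  moreover have "(yy s \<longlongrightarrow> 0) (at s)" using tend0[OF s d_yy[OF s]] vals[OF s] by simp
  ultimately show ?thesis using lh2[OF _ _ lim_y1[OF s]] by simp
qed

lemma lim_G1: assumes s: "s \<in> I" shows "((\<lambda>u. G1 s u / (u - s)) \<longlongrightarrow> kk s) (at s)"
proof -
  have f: "((\<lambda>u. (fst (X u) - fst (X s)) / (u - s)) \<longlongrightarrow> fst (D1 s)) (at s)"
    using hvd_fst[OF dX[OF s]] unfolding has_field_derivative_iff by simp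
  have g: "((\<lambda>u. (snd (X u) - snd (X s)) / (u - s)) \<longlongrightarrow> snd (D1 s)) (at s)"
    using hvd_snd[OF dX[OF s]] unfolding has_field_derivative_iff by simp
  have c1: "((\<lambda>u. fst (D2 u)) \<longlongrightarrow> fst (D2 s)) (at s)" "((\<lambda>u. snd (D2 u)) \<longlongrightarrow> snd (D2 s)) (at s)"
    using contD2[OF s] unfolding isCont_def by (auto intro: tendsto_intros)
  have "((\<lambda>u. ((fst (X u) - fst (X s)) / (u - s)) * snd (D2 u) - ((snd (X u) - snd (X s)) / (u - s)) * fst (D2 u))
      \<longlongrightarrow> fst (D1 s) * snd (D2 s) - snd (D1 s) * fst (D2 s)) (at s)"
    by (intro tendsto_intros f g c1)
  moreover have "(\<lambda>u. G1 s u / (u - s)) = (\<lambda>u. ((fst (X u) - fst (X s)) / (u - s)) * snd (D2 u) - ((snd (X u) - snd (X s)) / (u - s)) * fst (D2 u))"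
    proof -
    have e: "\<And>a d c e g::real. (a*d - e*g)/c = (a/c)*d - (e/c)*g" by (simp add: diff_divide_distrib)
    show ?thesis by (rule ext) (simp only: G1_def cross2_def fst_diff snd_diff e)
  qed
  ultimately show ?thesis by (simp add: kk_def cross2_def)
qed

lemma lim_GG2: assumes s: "s \<in> I" shows "((\<lambda>u. GG s u / (u - s)^2) \<longlongrightarrow> kk s / 2) (at s)"
proof -
  have "eventually (\<lambda>u. DERIV (GG s) u :> G1 s u) (at s)" using ev_I[OF s] by (rule eventually_mono) (rule d_GG)
  moreover have "(GG s \<longlongrightarrow> 0) (at s)" using tend0[OF s d_GG[OF s]] vals[OF s] by simp
  ultimately show ?thesis using lh2[OF _ _ lim_G1[OF s]] by simp
qed

lemma lim_num2: assumes s: "s \<in> I" shows "((\<lambda>u. num2 s u / (u - s)) \<longlongrightarrow> - y3 s s) (at s)"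
proof -
  have "((\<lambda>u. 3 * x2 s u * (y1 s u / (u - s)) + 2 * (yy s u / (u - s)) * x3 s u - (xx s u / (u - s)) * y3 s u)
     \<longlongrightarrow> 3 * 0 * kk s + 2 * 0 * x3 s s - 1 * y3 s s) (at s)"
    by (intro tendsto_intros lim_x2 lim_y1 lim_yy1 lim_x3 lim_xx1 lim_y3 s)
  moreover have "(\<lambda>u. num2 s u / (u - s)) = (\<lambda>u. 3 * x2 s u * (y1 s u / (u - s)) + 2 * (yy s u / (u - s)) * x3 s u - (xx s u / (u - s)) * y3 s u)"
    by (rule ext) (simp add: num2_def diff_divide_distrib add_divide_distrib)
  ultimately show ?thesis by simp
qed

lemma lim_num1: assumes s: "s \<in> I" shows "((\<lambda>u. num1 s u / (u - s)^2) \<longlongrightarrow> - y3 s s / 2) (at s)"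
proof -
  have "eventually (\<lambda>u. DERIV (num1 s) u :> num2 s u) (at s)" using ev_I[OF s] by (rule eventually_mono) (rule d_num1)
  moreover have "(num1 s \<longlongrightarrow> 0) (at s)" using tend0[OF s d_num1[OF s]] vals[OF s] by simp
  ultimately show ?thesis using lh2[OF _ _ lim_num2[OF s]] by simp
qed

lemma lim_num: assumes s: "s \<in> I" shows "((\<lambda>u. num s u / (u - s)^3) \<longlongrightarrow> - y3 s s / 6) (at s)"
proof -
  have "eventually (\<lambda>u. DERIV (num s) u :> num1 s u) (at s)" using ev_I[OF s] by (rule eventually_mono) (rule d_num)
  moreover have "(num s \<longlongrightarrow> 0) (at s)" using tend0[OF s d_num[OF s]] vals[OF s] by simp
  ultimately show ?thesis using lh3[OF _ _ lim_num1[OF s]] by simp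
qed

end

context C3c begin

lemma d_mm: assumes u: "u \<in> I" and ne: "y1 s u \<noteq> 0"
  shows "DERIV (mm s) u :> yy s u * kk u / (y1 s u)^2"
proof -
  have "DERIV (\<lambda>v. GG s v / y1 s v) u :> (G1 s u * y1 s u - GG s u * y2 s u) / (y1 s u * y1 s u)"
    by (rule DERIV_divide[OF d_GG[OF u] d_y1[OF u] ne])
  moreover have "G1 s u * y1 s u - GG s u * y2 s u = yy s u * kk u"
    using pluecker[of "X u - X s" "D2 u" "D1 s" "D1 u"]
    by (simp add: G1_def y1_def GG_def y2_def yy_def kk_def cross2_def algebra_simps)
  ultimately show ?thesis unfolding mm_def[abs_def] by (simp add: power2_eq_square)
qed

lemma key:
  assumes s: "s \<in> I" and u: "u \<in> I" and ne: "y1 s u \<noteq> 0"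
    and ev: "eventually (\<lambda>v. \<bar>mm s v - mm s u\<bar> *
        \<bar>yy s u + cross2 (X v - X u) (D1 v) / cross2 (D1 u) (D1 v) * y1 s u\<bar>
        = lam * \<bar>cross2 (X u - X s) (X v - X s)\<bar>) (at u)"
  shows "\<bar>yy s u * kk u / (y1 s u)^2\<bar> * \<bar>yy s u\<bar> = lam * \<bar>GG s u\<bar>"
proof -
  let ?m' = "yy s u * kk u / (y1 s u)^2"
  have l1: "((\<lambda>v. (mm s v - mm s u) / (v - u)) \<longlongrightarrow> ?m') (at u)"
    using d_mm[OF u ne] unfolding has_field_derivative_iff .
  have df: "DERIV (\<lambda>v. cross2 (X v - X u) (D1 v)) u :> cross2 (D1 u) (D1 u) + cross2 (X u - X u) (D2 u)"
    by (rule cross2_deriv[OF dPv[OF u] dD1[OF u]])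
  have lf: "((\<lambda>v. cross2 (X v - X u) (D1 v) / (v - u)) \<longlongrightarrow> 0) (at u)"
    using df unfolding has_field_derivative_iff by simp
  have dg: "DERIV (\<lambda>v. cross2 (D1 u) (D1 v)) u :> cross2 0 (D1 u) + cross2 (D1 u) (D2 u)"
    by (rule cross2_deriv[OF has_vector_derivative_const dD1[OF u]])
  have lg: "((\<lambda>v. cross2 (D1 u) (D1 v) / (v - u)) \<longlongrightarrow> kk u) (at u)"
    using dg unfolding has_field_derivative_iff by (simp add: kk_def)
  have kne': "kk u \<noteq> 0" using kne[OF u] by (simp add: kk_def)
  have lb: "((\<lambda>v. (cross2 (X v - X u) (D1 v) / (v - u)) / (cross2 (D1 u) (D1 v) / (v - u))) \<longlongrightarrow> 0 / kk u) (at u)"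
    by (rule tendsto_divide[OF lf lg kne'])
  have lb': "((\<lambda>v. cross2 (X v - X u) (D1 v) / cross2 (D1 u) (D1 v)) \<longlongrightarrow> 0) (at u)"
  proof -
    have "eventually (\<lambda>v. (cross2 (X v - X u) (D1 v) / (v - u)) / (cross2 (D1 u) (D1 v) / (v - u))
       = cross2 (X v - X u) (D1 v) / cross2 (D1 u) (D1 v)) (at u)"
      using ev_ne[of u] by eventually_elim simp
    from tendsto_cong[OF this] lb show ?thesis by simp
  qed
  have dc: "DERIV (\<lambda>v. cross2 (X u - X s) (X v - X s)) u :> cross2 0 (X u - X s) + cross2 (X u - X s) (D1 u)"
    by (rule cross2_deriv[OF has_vector_derivative_const dPv[OF u]])
  have lc: "((\<lambda>v. cross2 (X u - X s) (X v - X s) / (v - u)) \<longlongrightarrow> GG s u) (at u)"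
    using dc unfolding has_field_derivative_iff by (simp add: GG_def)
  have L: "((\<lambda>v. \<bar>(mm s v - mm s u) / (v - u)\<bar> *
        \<bar>yy s u + cross2 (X v - X u) (D1 v) / cross2 (D1 u) (D1 v) * y1 s u\<bar>) \<longlongrightarrow>
        \<bar>?m'\<bar> * \<bar>yy s u + 0 * y1 s u\<bar>) (at u)"
    by (intro tendsto_intros l1 lb')
  have R: "((\<lambda>v. lam * \<bar>cross2 (X u - X s) (X v - X s) / (v - u)\<bar>) \<longlongrightarrow> lam * \<bar>GG s u\<bar>) (at u)"
    by (intro tendsto_intros lc)
  have E: "eventually (\<lambda>v. \<bar>(mm s v - mm s u) / (v - u)\<bar> *
        \<bar>yy s u + cross2 (X v - X u) (D1 v) / cross2 (D1 u) (D1 v) * y1 s u\<bar> =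
        lam * \<bar>cross2 (X u - X s) (X v - X s) / (v - u)\<bar>) (at u)"
    using ev ev_ne[of u]
  proof eventually_elim
    case (elim v)
    then have "\<bar>mm s v - mm s u\<bar> / \<bar>v - u\<bar> *
        \<bar>yy s u + cross2 (X v - X u) (D1 v) / cross2 (D1 u) (D1 v) * y1 s u\<bar> =
        lam * \<bar>cross2 (X u - X s) (X v - X s)\<bar> / \<bar>v - u\<bar>"
      by (metis (no_types, lifting) times_divide_eq_left times_divide_eq_right mult.commute)
    then show ?case by (simp add: abs_divide)
  qed
  from tendsto_unique[OF _ tendsto_cong[OF E, THEN iffD1, OF L] R] show ?thesis by simp
qed

end


lemma const_side:
  fixes f :: "real \<Rightarrow> real"
  assumes a: "a < b" and d: "\<And>x. a < x \<Longrightarrow> x < b \<Longrightarrow> DERIV f x :> 0" and u: "a < u" "u < b" "a < v" "v < b"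
  shows "f v = f u"
proof -
  have gen: "f q = f p" if pq0: "a < p" "p \<le> q" "q < b" for p q
  proof (cases "p = q")
    case False
    then have pq: "p < q" using pq0 by simp
    have "\<forall>x\<in>{p..q}. isCont f x"
    proof
      fix x assume "x \<in> {p..q}"
      then have "a < x" "x < b" using pq0 by auto
      from d[OF this] show "isCont f x" by (rule DERIV_isCont)
    qed
    then have "continuous_on {p..q} f" by (rule continuous_at_imp_continuous_on)
    moreover have "\<And>x. p < x \<Longrightarrow> x < q \<Longrightarrow> DERIV f x :> 0" using d pq0 by simp
    ultimately show ?thesis using DERIV_isconst2[OF pq, of f q] pq by simp
  qed simp
  show ?thesis
  proof (cases "u \<le> v")
    case True then show ?thesis using gen[of u v] u by simp
  next
    case False then show ?thesis using gen[of v u] u by simp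
  qed
qed

lemma const_lim:
  fixes f :: "real \<Rightarrow> real"
  assumes e: "e > 0" and d: "\<And>x. 0 < \<bar>x - s\<bar> \<Longrightarrow> \<bar>x - s\<bar> < e \<Longrightarrow> DERIV f x :> 0"
    and L: "(f \<longlongrightarrow> L) (at s)" and u: "0 < \<bar>u - s\<bar>" "\<bar>u - s\<bar> < e"
  shows "f u = L"
proof (cases "u > s")
  case True
  have "eventually (\<lambda>v. v \<in> {s<..<s+e}) (at_right s)" by (rule eventually_at_right_real) (use e in simp)
  then have ev: "eventually (\<lambda>v. f v = f u) (at_right s)"
  proof eventually_elim
    case (elim v)
    have d': "\<And>x. s < x \<Longrightarrow> x < s + e \<Longrightarrow> DERIV f x :> 0" using d by simp
    show ?case by (rule const_side[of s "s+e", OF _ d']) (use elim True u e in simp_all)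
  qed
  moreover have "(f \<longlongrightarrow> L) (at_right s)" using L filterlim_at_split by blast
  ultimately have "((\<lambda>v. f u) \<longlongrightarrow> L) (at_right s)" using tendsto_cong[OF ev] by simp
  then show ?thesis using tendsto_const_iff[OF trivial_limit_at_right_real] by blast
next
  case False
  then have us: "u < s" using u by auto
  have "eventually (\<lambda>v. v \<in> {s-e<..<s}) (at_left s)" by (rule eventually_at_left_real) (use e in simp)
  then have ev: "eventually (\<lambda>v. f v = f u) (at_left s)"
  proof eventually_elim
    case (elim v)
    have d': "\<And>x. s - e < x \<Longrightarrow> x < s \<Longrightarrow> DERIV f x :> 0" using d by simp
    show ?case by (rule const_side[of "s-e" s, OF _ d']) (use elim us u e in simp_all)
  qed
  moreover have "(f \<longlongrightarrow> L) (at_left s)" using L filterlim_at_split by blast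
  ultimately have "((\<lambda>v. f u) \<longlongrightarrow> L) (at_left s)" using tendsto_cong[OF ev] by simp
  then show ?thesis using tendsto_const_iff[OF trivial_limit_at_left_real] by blast
qed

context C3c begin
lemma ev_nz: assumes "((\<lambda>u. f u / g u) \<longlongrightarrow> c) (at s)" "c \<noteq> (0::real)"
  shows "eventually (\<lambda>u. f u \<noteq> 0) (at s)"
proof -
  have "eventually (\<lambda>u. f u / g u \<noteq> 0) (at s)" using assms tendsto_imp_eventually_ne by blast
  then show ?thesis by eventually_elim auto
qed

lemma kk_s: "s \<in> I \<Longrightarrow> kk s \<noteq> 0" using kne by (simp add: kk_def)

lemma ev_basic: assumes s: "s \<in> I"
  shows "eventually (\<lambda>u. u \<in> I \<and> u \<noteq> s \<and> y1 s u \<noteq> 0 \<and> yy s u \<noteq> 0 \<and> GG s u \<noteq> 0 \<and> kk u * GG s u > 0) (at s)"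
proof -
  have "eventually (\<lambda>u. y1 s u \<noteq> 0) (at s)" by (rule ev_nz[OF lim_y1[OF s]]) (use kk_s[OF s] in simp)
  moreover have "eventually (\<lambda>u. yy s u \<noteq> 0) (at s)" by (rule ev_nz[OF lim_yy2[OF s]]) (use kk_s[OF s] in simp)
  moreover have "eventually (\<lambda>u. GG s u \<noteq> 0) (at s)" by (rule ev_nz[OF lim_GG2[OF s]]) (use kk_s[OF s] in simp)
  moreover have "eventually (\<lambda>u. kk u * (GG s u / (u - s)^2) > 0) (at s)"
  proof -
    have "((\<lambda>u. kk u * (GG s u / (u - s)^2)) \<longlongrightarrow> kk s * (kk s / 2)) (at s)"
      by (intro tendsto_intros lim_kk lim_GG2 s)
    moreover have "kk s * (kk s / 2) > 0" using kk_s[OF s] by (auto simp: zero_less_mult_iff linorder_neq_iff)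
    ultimately show ?thesis using order_tendstoD(1) by blast
  qed
  moreover have "eventually (\<lambda>u. (u - s)^2 > 0) (at s)" using ev_ne[of s] by eventually_elim simp
  ultimately show ?thesis using ev_I[OF s] ev_ne[of s]
  proof eventually_elim
    case (elim u)
    then have "kk u * GG s u / (u - s)^2 > 0" by simp
    then have "kk u * GG s u > 0" using elim by (simp add: zero_less_divide_iff)
    then show ?case using elim by simp
  qed
qed

end

lemma aux_F: fixes a b c k h :: real assumes "h \<noteq> 0" "b \<noteq> 0" "c \<noteq> 0"
  shows "(a / h^2)^2 * k / ((b / h)^2 * \<bar>c / h^2\<bar>) = a^2 * k / (b^2 * \<bar>c\<bar>)"
proof -
  have "\<bar>c / h^2\<bar> = \<bar>c\<bar> / h^2" by (simp add: abs_divide)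
  then show ?thesis using assms by (simp add: power_divide field_simps power2_eq_square)
qed

context C3c begin
lemma lam_half:
  assumes s: "s \<in> I"
    and ev: "eventually (\<lambda>u. \<bar>yy s u * kk u / (y1 s u)^2\<bar> * \<bar>yy s u\<bar> = lam * \<bar>GG s u\<bar>) (at s)"
  shows "lam = 1/2"
proof -
  let ?F = "\<lambda>u. (yy s u / (u - s)^2)^2 * \<bar>kk u\<bar> / ((y1 s u / (u - s))^2 * \<bar>GG s u / (u - s)^2\<bar>)"
  have L1: "(?F \<longlongrightarrow> (kk s / 2)^2 * \<bar>kk s\<bar> / ((kk s)^2 * \<bar>kk s / 2\<bar>)) (at s)"
    using kk_s[OF s] by (intro tendsto_intros lim_yy2 lim_y1 lim_GG2 lim_kk s) auto
  have L2: "(kk s / 2)^2 * \<bar>kk s\<bar> / ((kk s)^2 * \<bar>kk s / 2\<bar>) = 1/2"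
    using kk_s[OF s] by (simp add: power2_eq_square abs_mult field_simps)
  have E: "eventually (\<lambda>u. ?F u = lam) (at s)"
    using ev ev_basic[OF s]
  proof eventually_elim
    case (elim u)
    then have ne: "u - s \<noteq> 0" "y1 s u \<noteq> 0" "GG s u \<noteq> 0" by auto
    have e1: "\<bar>yy s u * kk u / (y1 s u)^2\<bar> * \<bar>yy s u\<bar> = (yy s u)^2 * \<bar>kk u\<bar> / (y1 s u)^2"
      by (simp add: abs_mult abs_divide power2_eq_square)
    have "lam * \<bar>GG s u\<bar> = (yy s u)^2 * \<bar>kk u\<bar> / (y1 s u)^2" using elim(1) e1 by simp
    then have "lam = (yy s u)^2 * \<bar>kk u\<bar> / ((y1 s u)^2 * \<bar>GG s u\<bar>)" using ne by (metis abs_eq_0 nonzero_mult_div_cancel_right divide_divide_eq_left)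

    also have "\<dots> = ?F u" using aux_F[OF ne, of "yy s u" "\<bar>kk u\<bar>"] by simp
    finally show ?case by simp
  qed
  have "((\<lambda>u. lam) \<longlongrightarrow> 1/2) (at s)" using tendsto_cong[OF E, THEN iffD1, OF L1] unfolding L2 .
  then show ?thesis using tendsto_const_iff[OF trivial_limit_at] by blast
qed

end

lemma aux_ode: fixes A K G B :: real assumes 1: "A*\<bar>K\<bar>/B = \<bar>G\<bar>/2" and 2: "\<bar>K\<bar>*\<bar>G\<bar> = K*G" and B: "B\<noteq>0" and G: "G\<noteq>0"
  shows "2*A*K = G*B"
proof -
  have a: "2*A*\<bar>K\<bar> = \<bar>G\<bar>*B" using 1 B by (simp add: field_simps)
  have "2*A*(\<bar>K\<bar>*\<bar>G\<bar>) = (\<bar>G\<bar>*\<bar>G\<bar>)*B" using a by (metis mult.assoc mult.commute)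
  then have "G * (2*A*K) = G * (G*B)" unfolding 2 abs_mult_self_eq by (simp only: mult_ac)
  then show ?thesis using G by simp
qed
context C3c begin
lemma ode:
  assumes s: "s \<in> I"
    and ev: "eventually (\<lambda>u. \<bar>yy s u * kk u / (y1 s u)^2\<bar> * \<bar>yy s u\<bar> = 1/2 * \<bar>GG s u\<bar>) (at s)"
  shows "eventually (\<lambda>u. u \<in> I \<and> u \<noteq> s \<and> y1 s u \<noteq> 0 \<and> yy s u \<noteq> 0 \<and> 2 * (yy s u)^2 * kk u = GG s u * (y1 s u)^2) (at s)"
  using ev ev_basic[OF s]
proof eventually_elim
  case (elim u)
  then have ne: "y1 s u \<noteq> 0" "GG s u \<noteq> 0" and pos: "kk u * GG s u > 0" by auto
  have e1: "\<bar>yy s u * kk u / (y1 s u)^2\<bar> * \<bar>yy s u\<bar> = (yy s u)^2 * \<bar>kk u\<bar> / (y1 s u)^2"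
    by (simp add: abs_mult abs_divide power2_eq_square)
  have h1: "(yy s u)^2 * \<bar>kk u\<bar> / (y1 s u)^2 = \<bar>GG s u\<bar> / 2" using elim(1) unfolding e1 by simp
  have h3: "\<bar>kk u\<bar> * \<bar>GG s u\<bar> = kk u * GG s u" using pos by (simp add: abs_mult[symmetric])
  have "2 * (yy s u)^2 * kk u = GG s u * (y1 s u)^2"
    by (rule aux_ode[OF h1 h3]) (use ne in simp_all)
  then show ?case using elim by simp
qed

end

context C3c begin
lemma GG_decomp: "s \<in> I \<Longrightarrow> GG s u = xx s u * y1 s u - yy s u * x1 s u"
  using decomp_cross[OF unit, of s "X u - X s" "D1 u"] by (simp add: GG_def xx_def y1_def yy_def x1_def)

lemma d_C: assumes s: "s \<in> I" and u: "u \<in> I" and ne: "y1 s u \<noteq> 0" "yy s u \<noteq> 0"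
  and o: "2 * (yy s u)^2 * kk u = GG s u * (y1 s u)^2"
  shows "DERIV (\<lambda>v. (mm s v)^2 / yy s v) u :> 0"
proof -
  have "DERIV (\<lambda>v. (mm s v)^2 / yy s v) u :>
     ((of_nat 2 * (yy s u * kk u / (y1 s u)^2 * mm s u ^ (2 - Suc 0))) * yy s u - (mm s u)^2 * y1 s u) / (yy s u * yy s u)"
    by (intro DERIV_divide DERIV_power d_mm d_yy u ne)
  moreover have "(of_nat 2 * (yy s u * kk u / (y1 s u)^2 * mm s u ^ (2 - Suc 0))) * yy s u - (mm s u)^2 * y1 s u = 0"
  proof -
    have "(of_nat 2 * (yy s u * kk u / (y1 s u)^2 * mm s u ^ (2 - Suc 0))) * yy s u - (mm s u)^2 * y1 s u
       = GG s u / (y1 s u)^3 * (2 * (yy s u)^2 * kk u - GG s u * (y1 s u)^2)"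
      using ne by (simp add: mm_def power2_eq_square power3_eq_cube field_simps)
    then show ?thesis using o by simp
  qed
  ultimately show ?thesis by simp
qed

lemma d_K: assumes s: "s \<in> I" and u: "u \<in> I" and ne: "y1 s u \<noteq> 0" "yy s u \<noteq> 0"
  and o: "2 * (yy s u)^2 * kk u = GG s u * (y1 s u)^2"
  shows "DERIV (\<lambda>v. (xx s v - 2 * mm s v) / yy s v) u :> 0"
proof -
  have "DERIV (\<lambda>v. (xx s v - 2 * mm s v) / yy s v) u :>
     ((x1 s u - 2 * (yy s u * kk u / (y1 s u)^2)) * yy s u - (xx s u - 2 * mm s u) * y1 s u) / (yy s u * yy s u)"
    by (intro DERIV_divide DERIV_diff DERIV_cmult d_mm d_yy d_xx u ne)
  moreover have "(x1 s u - 2 * (yy s u * kk u / (y1 s u)^2)) * yy s u - (xx s u - 2 * mm s u) * y1 s u = 0"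
  proof -
    have a: "2 * (yy s u * kk u / (y1 s u)^2) * yy s u = GG s u"
      using o ne by (simp add: power2_eq_square field_simps)
    have b: "mm s u * y1 s u = GG s u" using ne by (simp add: mm_def)
    have "(x1 s u - 2 * (yy s u * kk u / (y1 s u)^2)) * yy s u - (xx s u - 2 * mm s u) * y1 s u
       = x1 s u * yy s u - 2 * (yy s u * kk u / (y1 s u)^2) * yy s u - xx s u * y1 s u + 2 * (mm s u * y1 s u)"
      by (simp add: algebra_simps)
    also have "\<dots> = x1 s u * yy s u - xx s u * y1 s u + GG s u" using a b by simp
    also have "\<dots> = 0" using GG_decomp[OF s, of u] by simp
    finally show ?thesis .
  qed
  ultimately show ?thesis by simp
qed


end


definition par :: "real \<times> real \<Rightarrow> real \<times> real \<Rightarrow> real \<times> real \<Rightarrow> (real \<times> real) set" where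
  "par c u w = {c + t *\<^sub>R u + t\<^sup>2 *\<^sub>R w | t. True}"

lemma aux_C: fixes g b a h :: real assumes "h \<noteq> 0"
  shows "(g / h^2)^2 / ((b / h)^2 * (a / h^2)) = g^2 / (b^2 * a)"
  using assms by (simp add: power_divide field_simps power2_eq_square)

lemma aux_K: fixes n b a h :: real assumes "h \<noteq> 0"
  shows "(n / h^3) / ((b / h) * (a / h^2)) = n / (b * a)"
  using assms by (simp add: power_divide field_simps power2_eq_square power3_eq_cube)

context C3c begin

lemma lim_C: assumes s: "s \<in> I"
  shows "((\<lambda>u. (mm s u)^2 / yy s u) \<longlongrightarrow> 1 / (2 * kk s)) (at s)"
proof -
  let ?F = "\<lambda>u. (GG s u / (u - s)^2)^2 / ((y1 s u / (u - s))^2 * (yy s u / (u - s)^2))"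
  have L1: "(?F \<longlongrightarrow> (kk s / 2)^2 / ((kk s)^2 * (kk s / 2))) (at s)"
    using kk_s[OF s] by (intro tendsto_intros lim_yy2 lim_y1 lim_GG2 s) simp
  have L2: "(kk s / 2)^2 / ((kk s)^2 * (kk s / 2)) = 1 / (2 * kk s)"
    using kk_s[OF s] by (simp add: power2_eq_square field_simps)
  have E: "eventually (\<lambda>u. ?F u = (mm s u)^2 / yy s u) (at s)"
    using ev_ne[of s]
  proof eventually_elim
    case (elim u)
    then have "?F u = (GG s u)^2 / ((y1 s u)^2 * yy s u)" using aux_C by simp
    also have "\<dots> = (mm s u)^2 / yy s u" by (simp add: mm_def power_divide)
    finally show ?case .
  qed
  show ?thesis using tendsto_cong[OF E, THEN iffD1, OF L1] unfolding L2 .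
qed

lemma lim_K: assumes s: "s \<in> I"
  shows "((\<lambda>u. (xx s u - 2 * mm s u) / yy s u) \<longlongrightarrow> - y3 s s / (3 * (kk s)^2)) (at s)"
proof -
  let ?F = "\<lambda>u. (num s u / (u - s)^3) / ((y1 s u / (u - s)) * (yy s u / (u - s)^2))"
  have L1: "(?F \<longlongrightarrow> (- y3 s s / 6) / (kk s * (kk s / 2))) (at s)"
    using kk_s[OF s] by (intro tendsto_intros lim_yy2 lim_y1 lim_num s) simp
  have L2: "(- y3 s s / 6) / (kk s * (kk s / 2)) = - y3 s s / (3 * (kk s)^2)"
    using kk_s[OF s] by (simp add: power2_eq_square field_simps)
  have E: "eventually (\<lambda>u. ?F u = (xx s u - 2 * mm s u) / yy s u) (at s)"
    using ev_ne[of s] ev_basic[OF s]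
  proof eventually_elim
    case (elim u)
    then have ne: "y1 s u \<noteq> 0" by simp
    have "?F u = num s u / (y1 s u * yy s u)" using aux_K elim by simp
    also have "\<dots> = (xx s u - 2 * mm s u) / yy s u"
    proof -
      have "xx s u - 2 * mm s u = num s u / y1 s u"
        using ne GG_decomp[OF s, of u] by (simp add: mm_def num_def field_simps)
      then show ?thesis by simp
    qed
    finally show ?case .
  qed
  show ?thesis using tendsto_cong[OF E, THEN iffD1, OF L1] unfolding L2 .
qed

lemma local_par:
  assumes s: "s \<in> I"
    and ev: "eventually (\<lambda>u. \<bar>yy s u * kk u / (y1 s u)^2\<bar> * \<bar>yy s u\<bar> = lam * \<bar>GG s u\<bar>) (at s)"
  shows "lam = 1/2 \<and> (\<exists>e>0. \<exists>c p w. cross2 p w \<noteq> 0 \<and> (\<forall>v. \<bar>v - s\<bar> < e \<longrightarrow> v \<in> I \<and> X v \<in> par c p w))"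
proof -
  have lam: "lam = 1/2" by (rule lam_half[OF s ev])
  have "eventually (\<lambda>u. u \<in> I \<and> u \<noteq> s \<and> y1 s u \<noteq> 0 \<and> yy s u \<noteq> 0 \<and> 2 * (yy s u)^2 * kk u = GG s u * (y1 s u)^2) (at s)"
    by (rule ode[OF s]) (use ev lam in simp)
  then obtain d where d: "d > 0" and dP: "\<And>x. x \<noteq> s \<Longrightarrow> dist x s < d \<Longrightarrow>
      x \<in> I \<and> x \<noteq> s \<and> y1 s x \<noteq> 0 \<and> yy s x \<noteq> 0 \<and> 2 * (yy s x)^2 * kk x = GG s x * (y1 s x)^2"
    unfolding eventually_at by auto
  obtain r where r: "r > 0" "ball s r \<subseteq> I" using Iopen s openE by blast
  define e where "e = min d r"
  have e: "e > 0" using d r by (simp add: e_def)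
  have P: "x \<in> I \<and> y1 s x \<noteq> 0 \<and> yy s x \<noteq> 0 \<and> 2 * (yy s x)^2 * kk x = GG s x * (y1 s x)^2"
    if "0 < \<bar>x - s\<bar>" "\<bar>x - s\<bar> < e" for x
    using dP[of x] that by (auto simp: e_def dist_real_def)
  define C0 where "C0 = 1 / (2 * kk s)"
  define K0 where "K0 = - y3 s s / (3 * (kk s)^2)"
  have C: "(mm s x)^2 / yy s x = C0" if "0 < \<bar>x - s\<bar>" "\<bar>x - s\<bar> < e" for x
    unfolding C0_def
    by (rule const_lim[OF e _ lim_C[OF s] that]) (use P in \<open>auto intro!: d_C[OF s]\<close>)
  have K: "(xx s x - 2 * mm s x) / yy s x = K0" if "0 < \<bar>x - s\<bar>" "\<bar>x - s\<bar> < e" for x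
    unfolding K0_def
    by (rule const_lim[OF e _ lim_K[OF s] that]) (use P in \<open>auto intro!: d_K[OF s]\<close>)
  have C0ne: "C0 \<noteq> 0" using kk_s[OF s] by (simp add: C0_def)
  define T where "T = D1 s"
  define Nr where "Nr = (- snd T, fst T)"
  define w where "w = (1 / (4 * C0)) *\<^sub>R (K0 *\<^sub>R T + Nr)"
  have nT: "norm T = 1" using unit[OF s] by (simp add: T_def)
  have TN: "cross2 T Nr = 1"
    using nT by (simp add: Nr_def cross2_def norm_prod_def power2_eq_square)
  have cw: "cross2 T w \<noteq> 0"
    using TN C0ne by (simp add: w_def cross2_def algebra_simps)
  have mem: "X v \<in> par (X s) T w" if v: "\<bar>v - s\<bar> < e" for v
  proof (cases "v = s")
    case True
    then show ?thesis unfolding par_def by (auto intro: exI[of _ 0])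
  next
    case False
    then have v0: "0 < \<bar>v - s\<bar>" by simp
    note Pv = P[OF v0 v]
    have yne: "yy s v \<noteq> 0" using Pv by simp
    have c: "(mm s v)^2 = C0 * yy s v" using C[OF v0 v] yne by (simp add: field_simps)
    have k: "xx s v = 2 * mm s v + K0 * yy s v" using K[OF v0 v] yne by (simp add: field_simps)
    define t where "t = 2 * mm s v"
    have yt: "yy s v = t^2 / (4 * C0)" using c C0ne by (simp add: t_def power2_eq_square field_simps)
    have dec: "X v - X s = xx s v *\<^sub>R T + yy s v *\<^sub>R Nr"
      using decomp_vec[OF nT, of "X v - X s"] by (simp add: xx_def yy_def T_def Nr_def)
    have "X v = X s + t *\<^sub>R T + t^2 *\<^sub>R w"
    proof -
      have "t^2 *\<^sub>R w = yy s v *\<^sub>R (K0 *\<^sub>R T + Nr)" using yt by (simp add: w_def)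
      then have "X s + t *\<^sub>R T + t^2 *\<^sub>R w = X s + (t + K0 * yy s v) *\<^sub>R T + yy s v *\<^sub>R Nr"
        by (simp add: algebra_simps scaleR_add_left)
      also have "\<dots> = X v" using dec k by (simp add: t_def algebra_simps)
      finally show ?thesis by simp
    qed
    then show ?thesis unfolding par_def by blast
  qed
  have "\<forall>v. \<bar>v - s\<bar> < e \<longrightarrow> v \<in> I \<and> X v \<in> par (X s) T w"
    using mem r by (auto simp: e_def dist_real_def subset_iff)
  then show ?thesis using lam e cw by blast
qed

end


lemma basis2: assumes "cross2 u w \<noteq> 0"
  shows "v = (cross2 v w / cross2 u w) *\<^sub>R u + (cross2 u v / cross2 u w) *\<^sub>R w"
proof -
  have "cross2 u w *\<^sub>R v = cross2 v w *\<^sub>R u + cross2 u v *\<^sub>R w"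
    by (simp add: cross2_def prod_eq_iff algebra_simps)
  then have "v = (1 / cross2 u w) *\<^sub>R (cross2 v w *\<^sub>R u + cross2 u v *\<^sub>R w)"
    using assms by (metis (no_types, lifting) divide_self_if scaleR_one scaleR_scaleR times_divide_eq_left mult_1)
  then show ?thesis by (simp add: scaleR_add_right)
qed

lemma par_iff: assumes d: "cross2 u w \<noteq> 0"
  shows "p \<in> par c u w \<longleftrightarrow> cross2 u (p - c) / cross2 u w = (cross2 (p - c) w / cross2 u w)^2"
proof
  assume "p \<in> par c u w"
  then obtain t where p: "p = c + t *\<^sub>R u + t\<^sup>2 *\<^sub>R w" unfolding par_def by blast
  have a: "cross2 (p - c) w = t * cross2 u w" "cross2 u (p - c) = t^2 * cross2 u w"
    unfolding p by (simp_all add: cross2_def algebra_simps power2_eq_square)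
  show "cross2 u (p - c) / cross2 u w = (cross2 (p - c) w / cross2 u w)^2"
    unfolding a using d by simp
next
  assume h: "cross2 u (p - c) / cross2 u w = (cross2 (p - c) w / cross2 u w)^2"
  define t where "t = cross2 (p - c) w / cross2 u w"
  have "p - c = t *\<^sub>R u + t^2 *\<^sub>R w" using basis2[OF d, of "p - c"] h by (simp add: t_def)
  then have "p = c + t *\<^sub>R u + t^2 *\<^sub>R w" by (simp add: algebra_simps)
  then show "p \<in> par c u w" unfolding par_def by blast
qed

lemma par_unique:
  assumes d1: "cross2 u1 w1 \<noteq> 0" and d2: "cross2 u2 w2 \<noteq> 0"
    and S: "infinite S" "S \<subseteq> par c1 u1 w1" "S \<subseteq> par c2 u2 w2"
  shows "par c1 u1 w1 \<subseteq> par c2 u2 w2"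
proof -
  define q where "q t = c1 + t *\<^sub>R u1 + t\<^sup>2 *\<^sub>R w1" for t
  define dd where "dd = cross2 u2 w2"
  define a0 where "a0 = cross2 (c1 - c2) w2 / dd"
  define a1 where "a1 = cross2 u1 w2 / dd"
  define a2 where "a2 = cross2 w1 w2 / dd"
  define b0 where "b0 = cross2 u2 (c1 - c2) / dd"
  define b1 where "b1 = cross2 u2 u1 / dd"
  define b2 where "b2 = cross2 u2 w1 / dd"
  have A: "cross2 (q t - c2) w2 / dd = a0 + a1 * t + a2 * t^2" for t
    by (simp add: q_def a0_def a1_def a2_def cross2_def add_divide_distrib diff_divide_distrib algebra_simps)
  have B: "cross2 u2 (q t - c2) / dd = b0 + b1 * t + b2 * t^2" for t
    by (simp add: q_def b0_def b1_def b2_def cross2_def add_divide_distrib diff_divide_distrib algebra_simps)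
  define pp where "pp = [: b0 - a0*a0, b1 - 2*a0*a1, b2 - a1*a1 - 2*a0*a2, - 2*a1*a2, - (a2*a2) :]"
  have pq: "poly pp t = (b0 + b1 * t + b2 * t^2) - (a0 + a1 * t + a2 * t^2)^2" for t
    by (simp add: pp_def power2_eq_square algebra_simps)
  have mem: "q t \<in> par c2 u2 w2 \<longleftrightarrow> poly pp t = 0" for t
    unfolding par_iff[OF d2] pq A[symmetric] B[symmetric] dd_def by simp
  have "S \<subseteq> q ` {t. q t \<in> S}"
    using S(2) unfolding par_def q_def by blast
  then have inf: "infinite {t. q t \<in> S}" using S(1) finite_surj by blast
  have "{t. q t \<in> S} \<subseteq> {t. poly pp t = 0}" using S(3) mem by blast
  then have "infinite {t. poly pp t = 0}" using inf finite_subset by blast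
  then have "pp = 0" using poly_roots_finite by blast
  then have "\<forall>t. q t \<in> par c2 u2 w2" using mem by simp
  then show ?thesis unfolding par_def q_def by blast
qed


context C3c begin

lemma vd1_eq: "t \<in> I \<Longrightarrow> vector_derivative X (at t) = D1 t"
  using vector_derivative_at[OF dX] .

lemma U_eq: assumes s: "s \<in> I" and u: "u \<in> I" and v: "v \<in> I"
  shows "U_area X s (u - s) (v - s) = \<bar>mm s v - mm s u\<bar> *
        \<bar>yy s u + cross2 (X v - X u) (D1 v) / cross2 (D1 u) (D1 v) * y1 s u\<bar> / 2"
proof -
  define \<beta> where "\<beta> = cross2 (X v - X u) (D1 v) / cross2 (D1 u) (D1 v)"
  have B1: "line_inter (X s) (D1 s) (X u) (D1 u) = X s + mm s u *\<^sub>R D1 s"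
    by (simp add: line_inter_def mm_def GG_def y1_def)
  have B2: "line_inter (X s) (D1 s) (X v) (D1 v) = X s + mm s v *\<^sub>R D1 s"
    by (simp add: line_inter_def mm_def GG_def y1_def)
  have B: "line_inter (X u) (D1 u) (X v) (D1 v) = X u + \<beta> *\<^sub>R D1 u"
    by (simp add: line_inter_def \<beta>_def)
  have c: "cross2 (D1 s) (X u + \<beta> *\<^sub>R D1 u - X s) = yy s u + \<beta> * y1 s u"
    by (simp add: cross2_def yy_def y1_def algebra_simps)
  have "U_area X s (u - s) (v - s) = \<bar>mm s v - mm s u\<bar> * \<bar>yy s u + \<beta> * y1 s u\<bar> / 2"
    unfolding U_area_def Let_def using s u v
    by (simp add: vd1_eq B1 B2 B tri_area_line c)
  then show ?thesis by (simp add: \<beta>_def)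
qed

lemma T_eq: "T_area X s (u - s) (v - s) = \<bar>cross2 (X u - X s) (X v - X s)\<bar> / 2"
  by (simp add: T_area_def tri_area_def)

lemma hyp_key:
  assumes s: "s \<in> I" and inj: "inj_on X I" and dpos: "\<delta> > 0"
    and H: "\<forall>h1 h2. \<bar>h1\<bar> < \<delta> \<and> \<bar>h2\<bar> < \<delta> \<and> s + h1 \<in> I \<and> s + h2 \<in> I \<and>
                 X s \<noteq> X (s + h1) \<and> X s \<noteq> X (s + h2) \<and> X (s + h1) \<noteq> X (s + h2) \<longrightarrow>
                 U_area X s h1 h2 = lam * T_area X s h1 h2"
  shows "eventually (\<lambda>u. \<bar>yy s u * kk u / (y1 s u)^2\<bar> * \<bar>yy s u\<bar> = lam * \<bar>GG s u\<bar>) (at s)"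
proof -
  have "eventually (\<lambda>u. u \<in> ball s \<delta>) (at s)" using eventually_at_in_open'[of "ball s \<delta>" s] dpos by simp
  then show ?thesis using ev_basic[OF s]
  proof eventually_elim
    case (elim u)
    then have u: "u \<in> I" "u \<noteq> s" "y1 s u \<noteq> 0" "\<bar>u - s\<bar> < \<delta>" by (auto simp: dist_real_def)
    have ev: "eventually (\<lambda>v. v \<in> I \<and> v \<noteq> u \<and> v \<noteq> s \<and> \<bar>v - s\<bar> < \<delta>) (at u)"
    proof -
      have o: "open (I \<inter> ball s \<delta> - {s})" using Iopen by auto
      have "u \<in> I \<inter> ball s \<delta> - {s}" using u by (auto simp: dist_real_def)
      from eventually_at_in_open[OF o this] show ?thesis
        by eventually_elim (auto simp: dist_real_def)
    qed
    have "eventually (\<lambda>v. \<bar>mm s v - mm s u\<bar> *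
        \<bar>yy s u + cross2 (X v - X u) (D1 v) / cross2 (D1 u) (D1 v) * y1 s u\<bar>
        = lam * \<bar>cross2 (X u - X s) (X v - X s)\<bar>) (at u)"
      using ev
    proof eventually_elim
      case (elim v)
      have ne: "X s \<noteq> X u" "X s \<noteq> X v" "X u \<noteq> X v"
        using inj elim u s unfolding inj_on_def by metis+
      have "U_area X s (u - s) (v - s) = lam * T_area X s (u - s) (v - s)"
        using H[rule_format, of "u - s" "v - s"] elim u ne by simp
      then show ?case unfolding U_eq[OF s u(1) elim[THEN conjunct1]] T_eq by simp
    qed
    then show ?case using key[OF s u(1) u(3)] by blast
  qed
qed

end

lemma par_open:
  fixes X :: "real \<Rightarrow> real \<times> real"
  assumes d: "cross2 p w \<noteq> 0" and cX: "continuous_on I X" and inj: "inj_on X I" and oI: "open I"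
    and sub: "X ` I \<subseteq> par c p w"
  shows "openin (top_of_set (par c p w)) (X ` I)"
proof -
  define \<tau> where "\<tau> q = cross2 (q - c) w / cross2 p w" for q
  define \<phi> where "\<phi> t = c + t *\<^sub>R p + t\<^sup>2 *\<^sub>R w" for t
  have inv: "\<phi> (\<tau> q) = q" if qin: "q \<in> par c p w" for q
  proof -
    obtain t where q: "q = c + t *\<^sub>R p + t\<^sup>2 *\<^sub>R w" using qin unfolding par_def by blast
    have "cross2 (q - c) w = t * cross2 p w" unfolding q by (simp add: cross2_def algebra_simps power2_eq_square)
    then have "\<tau> q = t" unfolding \<tau>_def using d by simp
    then show ?thesis using q by (simp add: \<phi>_def)
  qed
  have ct: "continuous (at x) \<tau>" for x
    using d unfolding \<tau>_def cross2_def by (intro continuous_intros) auto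
  define g where "g = \<tau> \<circ> X"
  have cg: "continuous_on I g" unfolding g_def
    by (rule continuous_on_compose[OF cX]) (simp add: continuous_at_imp_continuous_on ct)
  have ig: "inj_on g I"
  proof (rule inj_onI)
    fix a b assume a: "a \<in> I" "b \<in> I" "g a = g b"
    have "X a = \<phi> (g a)" using inv[of "X a"] sub a by (auto simp: g_def)
    also have "\<dots> = \<phi> (g b)" using a by simp
    also have "\<dots> = X b" using inv[of "X b"] sub a by (auto simp: g_def)
    finally show "a = b" using inj a unfolding inj_on_def by blast
  qed
  have og: "open (g ` I)" by (rule invariance_of_domain[OF cg oI ig])
  have eq: "X ` I = par c p w \<inter> (\<tau> -` (g ` I))"
  proof
    show "X ` I \<subseteq> par c p w \<inter> \<tau> -` g ` I" using sub by (auto simp: g_def)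
    show "par c p w \<inter> \<tau> -` g ` I \<subseteq> X ` I"
    proof
      fix q assume q: "q \<in> par c p w \<inter> \<tau> -` g ` I"
      then obtain a where a: "a \<in> I" "\<tau> q = g a" by auto
      have "q = \<phi> (\<tau> q)" using inv q by simp
      also have "\<dots> = \<phi> (\<tau> (X a))" using a by (simp add: g_def)
      also have "\<dots> = X a" using inv[of "X a"] sub a by blast
      finally show "q \<in> X ` I" using a by blast
    qed
  qed
  have "open (\<tau> -` (g ` I))" by (rule continuous_open_vimage[OF og ct])
  then show ?thesis unfolding openin_open eq by blast
qed


theorem theorem2:
  fixes X :: "real \<Rightarrow> real \<times> real" and I :: "real set" and lam :: "real \<Rightarrow> real"
  assumes I: "open I" "is_interval I" "I \<noteq> {}"
    and sc: "strictly_convex_curve I X"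
    and arclen: "\<forall>s\<in>I. norm (vector_derivative X (at s)) = 1"
    and hyp: "\<forall>s\<in>I. \<exists>\<delta>>0. \<forall>h1 h2. \<bar>h1\<bar> < \<delta> \<and> \<bar>h2\<bar> < \<delta> \<and>
                 s + h1 \<in> I \<and> s + h2 \<in> I \<and>
                 X s \<noteq> X (s + h1) \<and> X s \<noteq> X (s + h2) \<and> X (s + h1) \<noteq> X (s + h2) \<longrightarrow>
                 U_area X s h1 h2 = lam s * T_area X s h1 h2"
  shows "(\<forall>s\<in>I. lam s = 1 / 2) \<and>
         (\<exists>P. is_parabola P \<and> X ` I \<subseteq> P \<and> openin (top_of_set P) (X ` I))"
proof -
  obtain D1 D2 D3 where C: "\<forall>t\<in>I. (X has_vector_derivative D1 t) (at t) \<and> (D1 has_vector_derivative D2 t) (at t) \<and>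
      (D2 has_vector_derivative D3 t) (at t) \<and> continuous (at t) D3"
    using sc unfolding strictly_convex_curve_def C3_on_def by blast
  have inj: "inj_on X I" using sc by (simp add: strictly_convex_curve_def)
  have vd1: "vector_derivative X (at t) = D1 t" if t: "t \<in> I" for t
    using C t vector_derivative_at by blast
  have vd2: "vector_derivative (\<lambda>u. vector_derivative X (at u)) (at t) = D2 t" if t: "t \<in> I" for t
  proof -
    have "((\<lambda>u. vector_derivative X (at u)) has_vector_derivative D2 t) (at t)"
      by (rule has_vector_derivative_transform_within_open[OF _ I(1) t]) (use C t vd1 in auto)
    then show ?thesis by (rule vector_derivative_at)
  qed
  have unit: "norm (D1 t) = 1" if t: "t \<in> I" for t using arclen vd1 t by auto
  have orth: "inner (D1 t) (D2 t) = 0" if t: "t \<in> I" for t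
  proof -
    have d: "DERIV (\<lambda>u. inner (D1 u) (D1 u)) t :> inner (D2 t) (D1 t) + inner (D1 t) (D2 t)"
      using inner_deriv[of D1 "D2 t" t UNIV D1 "D2 t"] C t by auto
    have d0: "DERIV (\<lambda>u. inner (D1 u) (D1 u)) t :> 0"
    proof (rule has_field_derivative_transform_within_open[OF DERIV_const I(1) t])
      fix x assume "x \<in> I"
      then show "1 = inner (D1 x) (D1 x)" using unit by (simp add: power2_norm_eq_inner[symmetric])
    qed
    from DERIV_unique[OF d d0] show ?thesis by (simp add: inner_commute)
  qed
  have kne: "cross2 (D1 t) (D2 t) \<noteq> 0" if t: "t \<in> I" for t
  proof
    assume c0: "cross2 (D1 t) (D2 t) = 0"
    have "\<forall>t\<in>I. vector_derivative X (at t) \<noteq> 0 \<and>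
        (\<exists>N. norm N = 1 \<and> inner N (vector_derivative X (at t)) = 0 \<and>
             (\<forall>u\<in>I. inner (X u - X t) N \<ge> 0) \<and>
             inner (vector_derivative (\<lambda>u. vector_derivative X (at u)) (at t)) N / (norm (vector_derivative X (at t)))\<^sup>2 > 0)"
      using sc unfolding strictly_convex_curve_def by (elim conjE) assumption
    then obtain N where N: "inner (vector_derivative (\<lambda>u. vector_derivative X (at u)) (at t)) N / (norm (vector_derivative X (at t)))\<^sup>2 > 0"
      using t by blast
    have "D2 t = 0" using decomp_vec[OF unit[OF t], of "D2 t"] c0 orth[OF t] by (simp add: zero_prod_def)
    then show False using N vd1[OF t] vd2[OF t] by simp
  qed
  interpret C3c X D1 D2 D3 I
    by unfold_locales (use I C unit kne orth in auto)
  have LP: "lam s = 1/2 \<and> (\<exists>e>0. \<exists>c p w. cross2 p w \<noteq> 0 \<and> (\<forall>v. \<bar>v - s\<bar> < e \<longrightarrow> v \<in> I \<and> X v \<in> par c p w))"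
    if s: "s \<in> I" for s
  proof -
    obtain \<delta> where \<delta>: "\<delta> > 0" and H: "\<forall>h1 h2. \<bar>h1\<bar> < \<delta> \<and> \<bar>h2\<bar> < \<delta> \<and>
                 s + h1 \<in> I \<and> s + h2 \<in> I \<and>
                 X s \<noteq> X (s + h1) \<and> X s \<noteq> X (s + h2) \<and> X (s + h1) \<noteq> X (s + h2) \<longrightarrow>
                 U_area X s h1 h2 = lam s * T_area X s h1 h2"
      using hyp s by blast
    show ?thesis by (rule local_par[OF s hyp_key[OF s inj \<delta> H]])
  qed
  have part1: "\<forall>s\<in>I. lam s = 1 / 2" using LP by simp
  have "\<forall>s\<in>I. \<exists>e c p w. e > 0 \<and> cross2 p w \<noteq> 0 \<and> (\<forall>v. \<bar>v - s\<bar> < e \<longrightarrow> v \<in> I \<and> X v \<in> par c p w)"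
    using LP by blast
  then obtain E Cc Pp Ww where EW: "\<And>s. s \<in> I \<Longrightarrow> E s > 0 \<and> cross2 (Pp s) (Ww s) \<noteq> 0 \<and>
     (\<forall>v. \<bar>v - s\<bar> < E s \<longrightarrow> v \<in> I \<and> X v \<in> par (Cc s) (Pp s) (Ww s))"
    by metis
  define Par where "Par s = par (Cc s) (Pp s) (Ww s)" for s
  have lc: "Par s' = Par s" if s: "s \<in> I" and s': "s' \<in> I" and d: "\<bar>s' - s\<bar> < E s" for s s'
  proof -
    define r where "r = min (E s - \<bar>s' - s\<bar>) (E s')"
    have r: "r > 0" using EW[OF s] EW[OF s'] d by (simp add: r_def)
    define J where "J = {s' - r <..< s' + r}"
    have Jp: "\<bar>v - s'\<bar> < E s' \<and> \<bar>v - s\<bar> < E s" if "v \<in> J" for v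
      using that by (auto simp: J_def r_def abs_less_iff)
    have JI: "J \<subseteq> I" using Jp EW[OF s'] by blast
    have X1: "X ` J \<subseteq> Par s" using Jp EW[OF s] by (auto simp: Par_def)
    have X2: "X ` J \<subseteq> Par s'" using Jp EW[OF s'] by (auto simp: Par_def)
    have "infinite J" using r by (simp add: J_def)
    moreover have "inj_on X J" using inj JI by (rule inj_on_subset)
    ultimately have inf: "infinite (X ` J)" using finite_imageD by blast
    have c1: "cross2 (Pp s) (Ww s) \<noteq> 0" using EW[OF s] by blast
    have c2: "cross2 (Pp s') (Ww s') \<noteq> 0" using EW[OF s'] by blast
    have "Par s \<subseteq> Par s'" using par_unique[OF c1 c2 inf] X1 X2 by (simp add: Par_def)
    moreover have "Par s' \<subseteq> Par s" using par_unique[OF c2 c1 inf] X1 X2 by (simp add: Par_def)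
    ultimately show ?thesis by blast
  qed
  obtain s0 where s0: "s0 \<in> I" using I(3) by blast
  have conn: "connected I" using I(2) by (rule is_interval_connected)
  have const: "Par a = Par s0" if a: "a \<in> I" for a
  proof -
    have "Par s0 = Par a"
    proof (rule connected_local_const[OF conn s0 a])
      show "\<forall>a\<in>I. eventually (\<lambda>b. Par a = Par b) (at a within I)"
      proof
        fix a assume a: "a \<in> I"
        have "\<forall>x\<in>I. x \<noteq> a \<and> dist x a < E a \<longrightarrow> Par a = Par x"
        proof (intro ballI impI)
          fix x assume x: "x \<in> I" "x \<noteq> a \<and> dist x a < E a"
          then have "\<bar>x - a\<bar> < E a" by (simp add: dist_real_def)
          then show "Par a = Par x" using lc[OF a x(1)] by simp
        qed
        then show "eventually (\<lambda>b. Par a = Par b) (at a within I)"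
          unfolding eventually_at using EW[OF a] by blast
      qed
    qed
    then show ?thesis by simp
  qed
  have sub: "X ` I \<subseteq> Par s0"
  proof
    fix q assume "q \<in> X ` I"
    then obtain a where a: "a \<in> I" "q = X a" by blast
    have "X a \<in> Par a" using EW[OF a(1)] by (auto simp: Par_def)
    then show "q \<in> Par s0" using const[OF a(1)] a by simp
  qed
  have isp: "is_parabola (Par s0)"
    unfolding is_parabola_def Par_def par_def using EW[OF s0] by blast
  have cX: "continuous_on I X"
    by (rule continuous_at_imp_continuous_on) (use contX in auto)
  have op: "openin (top_of_set (Par s0)) (X ` I)"
    unfolding Par_def by (rule par_open[OF _ cX inj I(1)]) (use EW[OF s0] sub in \<open>auto simp: Par_def\<close>)
  show ?thesis using part1 isp sub op by blast
qed


end
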